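(* For all integers $m,n\ge 0$, \[ S(m,n)=(-1)^m\sum_{P\in\mathcal{P}_{m+n}}(-1)^{h_{2m}(P)}, \] where $S(m,n)=\frac{(2m)!\,(2n)!}{m!\,n!\,(m+n)!}$.
   Context: For an integer $N\ge 0$, $\mathcal{P}_N$ denotes the set of all lattice paths $P=(P_0,P_1,\dots,P_{2N})$ from $P_0=(0,0)$ to $P_{2N}=(N,N)$ consisting of unit steps to the right (adding $(1,0)$) and up (adding $(0,1)$). For $0\le k\le 2N$, $h_k(P)$ denotes the $y$-coordinate of $P_k$, i.e. the height of $P$ after its $k$-th step. *)

theory Defs
  imports Complex_Main
begin

text \<open>A lattice path P = (P_0,...,P_{2N}) is represented as the list of its points
  (length 2N+1), each point an (x,y) pair of naturals.\<close>

definition lattice_paths :: "nat \<Rightarrow> (nat \<times> nat) list set" where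
  "lattice_paths N = {P. length P = 2*N + 1 \<and> P ! 0 = (0,0) \<and> P ! (2*N) = (N,N) \<and>
      (\<forall>k < 2*N. P ! (Suc k) = (fst (P ! k) + 1, snd (P ! k)) \<or>
                 P ! (Suc k) = (fst (P ! k), snd (P ! k) + 1))}"

definition height :: "nat \<Rightarrow> (nat \<times> nat) list \<Rightarrow> nat" where
  "height k P = snd (P ! k)"

definition S :: "nat \<Rightarrow> nat \<Rightarrow> real" where
  "S m n = of_nat (fact (2*m) * fact (2*n)) / of_nat (fact m * fact n * fact (m+n))"

end

theory Submission imports Defs "HOL-Computational_Algebra.Polynomial" begin

definition aa :: "nat \<Rightarrow> nat \<Rightarrow> real" where
  "aa m n = coeff ([:1,-1:]^(2*m) * [:1,1:]^(2*n)) (m+n)"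

lemma S_abs:
  fixes a b c d e p q u v s :: real
  assumes "c > 0" "d > 0" "e > 0" "u > 0" "v > 0" "s > 0" "p + q = 2*s"
  shows "a*p*(2*u)*b/(c*u*d*(e*s)) + a*(b*q*(2*v))/(c*(d*v)*(e*s)) = 4*(a*b/(c*d*e))"
proof -
  define K where "K = a*b/(c*d*e)"
  have t1: "a*p*(2*u)*b/(c*u*d*(e*s)) = (2*p)*K/s"
    using assms unfolding K_def by (simp add: field_simps)
  have t2: "a*(b*q*(2*v))/(c*(d*v)*(e*s)) = (2*q)*K/s"
    using assms unfolding K_def by (simp add: field_simps)
  have "(2*p)*K/s + (2*q)*K/s = (2*(p+q))*K/s"
    by (simp add: add_divide_distrib[symmetric] algebra_simps)
  also have "\<dots> = 4*K" using assms by simp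
  finally show ?thesis using t1 t2 unfolding K_def by simp
qed

lemma S_rec: "S (Suc m) n + S m (Suc n) = 4 * S m n"
proof -
  have f1: "fact (2 * Suc m) = (fact (2*m) :: real) * (2*real m+1) * (2*(real m+1))"
    by (simp add: algebra_simps)
  have f2: "fact (2 * Suc n) = (fact (2*n) :: real) * (2*real n+1) * (2*(real n+1))"
    by (simp add: algebra_simps)
  have f3: "fact (Suc m + n) = (fact (m+n) :: real) * (real m+real n+1)" by simp
  have f4: "fact (m + Suc n) = (fact (m+n) :: real) * (real m+real n+1)" by simp
  have f5: "fact (Suc m) = (fact m :: real) * (real m + 1)" by simp
  have f6: "fact (Suc n) = (fact n :: real) * (real n + 1)" by simp
  show ?thesis unfolding S_def of_nat_mult of_nat_fact f1 f2 f3 f4 f5 f6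
    by (rule S_abs) auto
qed

lemma aa_rec: "aa m (Suc n) - aa (Suc m) n = 4 * aa m n"
proof -
  define F where "F = ([:1,-1:]^(2*m) * [:1,1:]^(2*n) :: real poly)"
  have q1: "[:1,1:]^2 = ([:1,2,1:] :: real poly)" by (simp add: power2_eq_square)
  have q2: "[:1,-1:]^2 = ([:1,-2,1:] :: real poly)" by (simp add: power2_eq_square)
  have q3: "F * [:1,2,1:] - F * [:1,-2,1:] = F * ([:1,2,1:] - [:1,-2,1:])"
    by (rule right_diff_distrib[symmetric])
  have q4: "[:1,2,1:] - [:1,-2,1:] = (smult 4 [:0,1:] :: real poly)" by simp
  have q6: "F * [:0,1:] = pCons 0 F" by simp
  have q5: "F * smult 4 [:0,1:] = smult 4 (pCons 0 F)" by (simp only: mult_smult_right q6)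
  have n2: "2*Suc n = 2*n+2" "2*Suc m = 2*m+2" by simp_all
  have e1: "[:1,-1:]^(2*m) * [:1,1:]^(2*Suc n) = F * [:1,1:]^2"
    unfolding n2 power_add F_def by (simp only: mult.assoc)
  have e2: "[:1,-1:]^(2*Suc m) * [:1,1:]^(2*n) = F * [:1,-1:]^2"
    unfolding n2 power_add F_def by (simp only: mult_ac)
  have e: "[:1,-1:]^(2*m) * [:1,1:]^(2*Suc n) - [:1,-1:]^(2*Suc m) * [:1,1:]^(2*n)
        = smult 4 (pCons 0 F)" unfolding e1 e2 q1 q2 q3 q4 q5 ..
  have "aa m (Suc n) - aa (Suc m) n = coeff ([:1,-1:]^(2*m) * [:1,1:]^(2*Suc n) - [:1,-1:]^(2*Suc m) * [:1,1:]^(2*n)) (Suc (m+n))"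
    by (simp add: aa_def)
  also have "\<dots> = 4 * aa m n" unfolding e by (simp add: aa_def F_def)
  finally show ?thesis .
qed

lemma aa_S: "aa m n = (-1)^m * S m n"
proof (induction m arbitrary: n)
  case 0
  have "aa 0 n = of_nat ((2*n) choose n)"
    unfolding aa_def by (simp add: coeff_linear_poly_power)
  also have "\<dots> = S 0 n" unfolding S_def
    by (subst binomial_fact) (auto simp: mult_2)
  finally show ?case by simp
next
  case (Suc m)
  have "aa (Suc m) n = aa m (Suc n) - 4 * aa m n" using aa_rec[of m n] by simp
  also have "\<dots> = (-1)^m * (S m (Suc n) - 4 * S m n)" using Suc by (simp add: algebra_simps)
  also have "S m (Suc n) - 4 * S m n = - S (Suc m) n" using S_rec[of m n] by linarith
  also have "(-1)^m * (- S (Suc m) n) = (-1)^Suc m * S (Suc m) n" by simp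
  finally show ?case .
qed

definition cnt :: "bool list \<Rightarrow> nat" where "cnt s = length (filter id s)"

lemma cnt_simps[simp]: "cnt [] = 0" "cnt (True # s) = Suc (cnt s)" "cnt (False # s) = cnt s"
  "cnt (x @ y) = cnt x + cnt y"
  by (auto simp: cnt_def)

lemma cnt_le: "cnt s \<le> length s" unfolding cnt_def by simp

lemma cnt_take_Suc: "k < length s \<Longrightarrow> cnt (take (Suc k) s) = cnt (take k s) + (if s ! k then 1 else 0)"
  by (simp add: take_Suc_conv_app_nth cnt_def)

lemma lists_Suc: "{s::bool list. length s = Suc L} = Cons True ` {s. length s = L} \<union> Cons False ` {s. length s = L}"
  by (auto simp: length_Suc_conv)

lemma gf: "(\<Sum>s\<in>{s::bool list. length s = L}. monom (w ^ cnt s) (cnt s)) = ([:1,w:]^L :: real poly)"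
proof (induction L)
  case 0
  have "{s::bool list. length s = 0} = {[]}" by auto
  then show ?case by simp
next
  case (Suc L)
  let ?A = "{s::bool list. length s = L}"
  have fin: "finite ?A" using finite_lists_length_eq[of "UNIV::bool set" L] by simp
  have "(\<Sum>s\<in>{s::bool list. length s = Suc L}. monom (w ^ cnt s) (cnt s))
     = (\<Sum>s\<in>Cons True ` ?A. monom (w ^ cnt s) (cnt s)) + (\<Sum>s\<in>Cons False ` ?A. monom (w ^ cnt s) (cnt s))"
    unfolding lists_Suc by (rule sum.union_disjoint) (use fin in auto)
  also have "\<dots> = (\<Sum>s\<in>?A. monom (w ^ Suc (cnt s)) (Suc (cnt s))) + (\<Sum>s\<in>?A. monom (w ^ cnt s) (cnt s))"
    by (simp add: sum.reindex)
  also have "(\<Sum>s\<in>?A. monom (w ^ Suc (cnt s)) (Suc (cnt s))) = monom w 1 * (\<Sum>s\<in>?A. monom (w ^ cnt s) (cnt s))"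
    by (simp add: sum_distrib_left mult_monom)
  also have "monom w 1 * (\<Sum>s\<in>?A. monom (w ^ cnt s) (cnt s)) + (\<Sum>s\<in>?A. monom (w ^ cnt s) (cnt s))
     = monom w 1 * [:1,w:]^L + [:1,w:]^L" using Suc.IH by simp
  also have "monom w 1 * [:1,w:]^L + [:1,w:]^L = [:1,w:]^Suc L"
  proof -
    have "[:1,w:] = monom w 1 + (1::real poly)" by (simp add: monom_Suc one_pCons monom_0)
    then show ?thesis by (simp add: algebra_simps)
  qed
  finally show ?case .
qed

lemma coeff_prod:
  fixes A B :: "'a set" and f :: "'a \<Rightarrow> real"
  shows "coeff ((\<Sum>x\<in>A. monom (f x) (c1 x)) * (\<Sum>y\<in>B. monom 1 (c2 y))) N
    = (\<Sum>x\<in>A. \<Sum>y\<in>B. if c1 x + c2 y = N then f x else 0)"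
  by (simp add: sum_product coeff_sum mult_monom coeff_monom)

definition path_of :: "bool list \<Rightarrow> (nat \<times> nat) list" where
  "path_of s = map (\<lambda>k. (k - cnt (take k s), cnt (take k s))) [0..<Suc (length s)]"

definition steps_of :: "nat \<Rightarrow> (nat \<times> nat) list \<Rightarrow> bool list" where
  "steps_of N P = map (\<lambda>k. snd (P ! Suc k) \<noteq> snd (P ! k)) [0..<2*N]"

lemma path_of_nth: "k \<le> length s \<Longrightarrow> path_of s ! k = (k - cnt (take k s), cnt (take k s))"
  unfolding path_of_def by (simp add: nth_append less_Suc_eq_le del: upt_Suc)

lemma cnt_take_le: "cnt (take k s) \<le> k"
  using cnt_le[of "take k s"] by simp

lemma steps_path: assumes l: "length s = 2*N" shows "steps_of N (path_of s) = s"
proof (rule nth_equalityI)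
  show "length (steps_of N (path_of s)) = length s" using l by (simp add: steps_of_def)
next
  fix k assume "k < length (steps_of N (path_of s))"
  then have k: "k < length s" using l by (simp add: steps_of_def)
  then show "steps_of N (path_of s) ! k = s ! k"
    using l by (simp add: steps_of_def path_of_nth cnt_take_Suc)
qed

lemma path_in: "length s = 2*N \<Longrightarrow> cnt s = N \<Longrightarrow> path_of s \<in> lattice_paths N"
  unfolding lattice_paths_def
proof (intro CollectI conjI allI impI)
  assume l: "length s = 2*N" and c: "cnt s = N"
  show "length (path_of s) = 2*N+1" using l by (simp add: path_of_def)
  show "path_of s ! 0 = (0,0)" by (simp add: path_of_nth)
  show "path_of s ! (2*N) = (N,N)" using l c by (simp add: path_of_nth)
  fix k assume k: "k < 2*N"
  have le: "cnt (take k s) \<le> k" by (rule cnt_take_le)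
  show "path_of s ! Suc k = (fst (path_of s ! k) + 1, snd (path_of s ! k)) \<or>
        path_of s ! Suc k = (fst (path_of s ! k), snd (path_of s ! k) + 1)"
    using k l le by (simp add: path_of_nth cnt_take_Suc Suc_diff_le)
qed

lemma lp_nth: assumes P: "P \<in> lattice_paths N" and k: "k \<le> 2*N"
  shows "P ! k = (k - cnt (take k (steps_of N P)), cnt (take k (steps_of N P)))"
  using k
proof (induction k)
  case 0
  then show ?case using P by (simp add: lattice_paths_def)
next
  case (Suc k)
  have kl: "k < 2*N" using Suc by simp
  have IH: "P ! k = (k - cnt (take k (steps_of N P)), cnt (take k (steps_of N P)))" using Suc by simp
  have le: "cnt (take k (steps_of N P)) \<le> k" by (rule cnt_take_le)
  have len: "length (steps_of N P) = 2*N" by (simp add: steps_of_def)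
  have st: "steps_of N P ! k = (snd (P ! Suc k) \<noteq> snd (P ! k))" using kl by (simp add: steps_of_def)
  from P kl have "P ! (Suc k) = (fst (P ! k) + 1, snd (P ! k)) \<or>
                 P ! (Suc k) = (fst (P ! k), snd (P ! k) + 1)" by (simp add: lattice_paths_def)
  then show ?case
  proof
    assume h: "P ! (Suc k) = (fst (P ! k) + 1, snd (P ! k))"
    then show ?case using IH le st len kl by (simp add: cnt_take_Suc Suc_diff_le)
  next
    assume h: "P ! (Suc k) = (fst (P ! k), snd (P ! k) + 1)"
    then show ?case using IH le st len kl by (simp add: cnt_take_Suc)
  qed
qed

lemma path_steps: assumes P: "P \<in> lattice_paths N" shows "path_of (steps_of N P) = P"
proof (rule nth_equalityI)
  have len: "length (steps_of N P) = 2*N" by (simp add: steps_of_def)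
  show "length (path_of (steps_of N P)) = length P" using P len by (simp add: path_of_def lattice_paths_def)
  fix k assume "k < length (path_of (steps_of N P))"
  then have k: "k \<le> 2*N" using len by (simp add: path_of_def)
  show "path_of (steps_of N P) ! k = P ! k" using lp_nth[OF P k] k len by (simp add: path_of_nth)
qed

lemma steps_in: assumes P: "P \<in> lattice_paths N" shows "length (steps_of N P) = 2*N" "cnt (steps_of N P) = N"
proof -
  show len: "length (steps_of N P) = 2*N" by (simp add: steps_of_def)
  have "P ! (2*N) = (N,N)" using P by (simp add: lattice_paths_def)
  with lp_nth[OF P, of "2*N"] len show "cnt (steps_of N P) = N" by simp
qed


theorem mainTheorem1:
  fixes m n :: nat
  shows "S m n = (-1) ^ m * (\<Sum>P\<in>lattice_paths (m+n). (-1) ^ height (2*m) P)"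
proof -
  define N where "N = m + n"
  define T where "T = {s::bool list. length s = 2*N \<and> cnt s = N}"
  define g :: "bool list \<Rightarrow> real" where "g s = (-1) ^ cnt (take (2*m) s)" for s
  define L where "L = (\<lambda>k. {s::bool list. length s = k})"
  have finL: "finite (L k)" for k unfolding L_def using finite_lists_length_eq[of "UNIV::bool set" k] by simp
  have "(\<Sum>P\<in>lattice_paths N. (-1) ^ height (2*m) P :: real) = (\<Sum>s\<in>T. g s)"
  proof (rule sum.reindex_bij_witness[symmetric, of T "steps_of N" path_of])
    fix s assume "s \<in> T"
    then have l: "length s = 2*N" and c: "cnt s = N" by (auto simp: T_def)
    show "steps_of N (path_of s) = s" by (rule steps_path[OF l])
    show "path_of s \<in> lattice_paths N" by (rule path_in[OF l c])
    have "2*m \<le> length s" using l N_def by simp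
    then show "(-1) ^ height (2*m) (path_of s) = g s"
      by (simp add: height_def g_def path_of_nth)
  next
    fix P assume P: "P \<in> lattice_paths N"
    show "path_of (steps_of N P) = P" by (rule path_steps[OF P])
    show "steps_of N P \<in> T" using steps_in[OF P] by (simp add: T_def)
  qed
  also have "(\<Sum>s\<in>T. g s) = (\<Sum>s\<in>L (2*N). if cnt s = N then g s else 0)"
  proof -
    have "T = {s \<in> L (2*N). cnt s = N}" by (auto simp: T_def L_def)
    then show ?thesis by (simp only: sum.inter_filter[OF finL])
  qed
  also have "\<dots> = (\<Sum>(x,y)\<in>L (2*m) \<times> L (2*n). if cnt x + cnt y = N then (-1) ^ cnt x else 0)"
  proof (rule sum.reindex_bij_witness[symmetric, of _ "\<lambda>s. (take (2*m) s, drop (2*m) s)" "\<lambda>(x,y). x @ y"])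
    fix a assume "a \<in> L (2*m) \<times> L (2*n)"
    then obtain x y where a: "a = (x,y)" "length x = 2*m" "length y = 2*n" by (auto simp: L_def)
    show "(take (2*m) (case a of (x,y) \<Rightarrow> x @ y), drop (2*m) (case a of (x,y) \<Rightarrow> x @ y)) = a"
      using a by simp
    show "(case a of (x,y) \<Rightarrow> x @ y) \<in> L (2*N)" using a by (simp add: L_def N_def)
    show "(if cnt (case a of (x,y) \<Rightarrow> x @ y) = N then g (case a of (x,y) \<Rightarrow> x @ y) else 0)
        = (case a of (x,y) \<Rightarrow> if cnt x + cnt y = N then (-1) ^ cnt x else 0)"
      using a by (simp add: g_def)
  next
    fix s assume "s \<in> L (2*N)"
    then have l: "length s = 2*m + 2*n" by (simp add: L_def N_def)
    show "(case (take (2*m) s, drop (2*m) s) of (x,y) \<Rightarrow> x @ y) = s" by simp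
    show "(take (2*m) s, drop (2*m) s) \<in> L (2*m) \<times> L (2*n)" using l by (simp add: L_def)
  qed
  also have "\<dots> = (\<Sum>x\<in>L (2*m). \<Sum>y\<in>L (2*n). if cnt x + cnt y = N then (-1) ^ cnt x else 0)"
    by (rule sum.cartesian_product[symmetric])
  also have "\<dots> = coeff ((\<Sum>x\<in>L (2*m). monom ((-1) ^ cnt x) (cnt x)) * (\<Sum>y\<in>L (2*n). monom 1 (cnt y))) N"
    by (rule coeff_prod[symmetric])
  also have "\<dots> = aa m n"
    using gf[where L="2*m" and w="-1"] gf[where L="2*n" and w=1] by (simp add: aa_def L_def N_def)
  finally have "(\<Sum>P\<in>lattice_paths (m+n). (-1) ^ height (2*m) P :: real) = (-1)^m * S m n"
    using aa_S N_def by simp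
  then show ?thesis by simp
qed
end
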